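(* Assume $\bm\lambda\neq0$ and $\bm\mu\neq0$. For every $d\in\mathbb C$, the quotient $L(d,\bm\lambda,\bm\mu)=M_1(\bm\lambda,\bm\mu)/N_d$ is an irreducible $\widehat{\mathfrak{gl}}$-module (no nonzero proper subspace is invariant under all $E_{i,j}$); consequently it is also an irreducible module for $\mathcal W_{1+\infty,c=-1}\cong M^0$.
   Context: Let $\widehat{\mathcal A}$ be the Weyl algebra: the unital associative complex algebra generated by $a(r),a^*(r)$ ($r\in\mathbb Z$) with relations $[a(r),a(s)]=[a^*(r),a^*(s)]=0$ and $[a(r),a^*(s)]=\delta_{r+s,0}$. Fix integers $n\ge 0$, $m\ge 1$, $\bm\lambda=(\lambda_0,\dots,\lambda_n)\in\mathbb C^{n+1}$, $\bm\mu=(\mu_1,\dots,\mu_m)\in\mathbb C^m$, and set $\lambda_i=0$ for $i>n$, $\mu_j=0$ for $j>m$. The Whittaker module $M_1(\bm\lambda,\bm\mu)=\widehat{\mathcal A}/\mathcal I$, where $\mathcal I$ is the left ideal generated by $a(i)-\lambda_i$ ($i\ge 0$) and $a^*(j)-\mu_j$ ($j\ge 1$); $w=w_{\bm\lambda,\bm\mu}$ denotes the image of $1$. Normal ordering: $:a(i)a^*(j):$ equals $a^*(j)a(i)$ if $i\ge 0$ and $j\le 0$, and equals $a(i)a^*(j)$ otherwise. For $i,j\in\mathbb Z$, $E_{i,j}:=\,:a(-i)a^*(j):$ (operators giving a $\widehat{\mathfrak{gl}}$-module structure of central charge $-1$), and $I:=\sum_{j\in\mathbb Z}E_{j,j}$,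 a well-defined operator on $M_1(\bm\lambda,\bm\mu)$ commuting with all $E_{i,j}$. For $d\in\mathbb C$, $N_d$ is the smallest subspace of $M_1(\bm\lambda,\bm\mu)$ invariant under all $E_{i,j}$ and containing $(I-d)I^kw$ for all $k\ge0$, and $L(d,\bm\lambda,\bm\mu):=M_1(\bm\lambda,\bm\mu)/N_d$. The $\mathcal W_{1+\infty,c=-1}$-module structure is given by the operators $T_{r,f}=\sum_{j}f(-j):a(r-j)a^*(j):$ ($r\in\mathbb Z$, $f\in\mathbb C[x]$), which are the modes of the generating fields of $M^0=\ker J^0(0)\subset M$ (Weyl vertex algebra), $M^0\cong\mathcal W_{1+\infty,c=-1}$. *)

theory Defs
  imports "HOL-Library.Poly_Mapping" "HOL-Library.Groups_Big_Fun"
          "HOL-Computational_Algebra.Polynomial"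
begin

text \<open>Concrete PBW model of the Whittaker module M_1(lambda,mu).
  As a vector space, M_1 = C[a(r) (r<0), a*(s) (s<=0)] w (free, by PBW).
  Polynomial variables:
    Cr k  stands for a(-(k+1))   (k >= 0, i.e. a(r) with r <= -1),
    Cs k  stands for a*(-k)      (k >= 0, i.e. a*(s) with s <= 0).
  The vector w corresponds to the constant polynomial 1.\<close>

datatype wvar = Cr nat | Cs nat

type_synonym wmod = "(wvar \<Rightarrow>\<^sub>0 nat) \<Rightarrow>\<^sub>0 complex"

definition vmono :: "wvar \<Rightarrow> (wvar \<Rightarrow>\<^sub>0 nat)" where
  "vmono g = Poly_Mapping.single g 1"

definition wscale :: "complex \<Rightarrow> wmod \<Rightarrow> wmod" where
  "wscale c p = Poly_Mapping.map (\<lambda>x. c * x) p"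

definition wmul :: "wvar \<Rightarrow> wmod \<Rightarrow> wmod" where
  "wmul g p = Poly_Mapping.single (vmono g) 1 * p"

definition wder :: "wvar \<Rightarrow> wmod \<Rightarrow> wmod" where
  "wder g p = Abs_poly_mapping
     (\<lambda>\<alpha>. of_nat (Poly_Mapping.lookup \<alpha> g + 1) * Poly_Mapping.lookup p (\<alpha> + vmono g))"

definition wvec :: wmod where
  "wvec = Poly_Mapping.single 0 1"

definition opA :: "(nat \<Rightarrow> complex) \<Rightarrow> int \<Rightarrow> wmod \<Rightarrow> wmod" where
  "opA lam r p =
     (if r < 0 then wmul (Cr (nat (- r - 1))) p
      else wscale (lam (nat r)) p + wder (Cs (nat r)) p)"

definition opAs :: "(nat \<Rightarrow> complex) \<Rightarrow> int \<Rightarrow> wmod \<Rightarrow> wmod" where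
  "opAs mu s p =
     (if s \<le> 0 then wmul (Cs (nat (- s))) p
      else wscale (mu (nat s)) p - wder (Cr (nat s - 1)) p)"

text \<open>E_{i,j} = :a(-i) a*(j):\<close>
definition opE :: "(nat \<Rightarrow> complex) \<Rightarrow> (nat \<Rightarrow> complex) \<Rightarrow> int \<Rightarrow> int \<Rightarrow> wmod \<Rightarrow> wmod" where
  "opE lam mu i j p =
     (if - i \<ge> 0 \<and> j \<le> 0 then opAs mu j (opA lam (- i) p)
      else opA lam (- i) (opAs mu j p))"

text \<open>I = sum_j E_{j,j} (only finitely many terms are nonzero on each vector)\<close>
definition opI :: "(nat \<Rightarrow> complex) \<Rightarrow> (nat \<Rightarrow> complex) \<Rightarrow> wmod \<Rightarrow> wmod" where
  "opI lam mu p = Sum_any (\<lambda>j. opE lam mu j j p)"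

text \<open>T_{r,f} = sum_j f(-j) :a(r-j) a*(j): = sum_j f(-j) E_{j-r,j}\<close>
definition opT :: "(nat \<Rightarrow> complex) \<Rightarrow> (nat \<Rightarrow> complex) \<Rightarrow> int \<Rightarrow> complex poly \<Rightarrow> wmod \<Rightarrow> wmod" where
  "opT lam mu r f p = Sum_any (\<lambda>j. wscale (poly f (of_int (- j))) (opE lam mu (j - r) j p))"

definition wsubspace :: "wmod set \<Rightarrow> bool" where
  "wsubspace U \<longleftrightarrow> 0 \<in> U \<and> (\<forall>x\<in>U. \<forall>y\<in>U. x + y \<in> U) \<and> (\<forall>c. \<forall>x\<in>U. wscale c x \<in> U)"

definition E_invariant :: "(nat \<Rightarrow> complex) \<Rightarrow> (nat \<Rightarrow> complex) \<Rightarrow> wmod set \<Rightarrow> bool" where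
  "E_invariant lam mu U \<longleftrightarrow> (\<forall>i j. \<forall>x\<in>U. opE lam mu i j x \<in> U)"

definition T_invariant :: "(nat \<Rightarrow> complex) \<Rightarrow> (nat \<Rightarrow> complex) \<Rightarrow> wmod set \<Rightarrow> bool" where
  "T_invariant lam mu U \<longleftrightarrow> (\<forall>r f. \<forall>x\<in>U. opT lam mu r f x \<in> U)"

definition Nd :: "(nat \<Rightarrow> complex) \<Rightarrow> (nat \<Rightarrow> complex) \<Rightarrow> complex \<Rightarrow> wmod set" where
  "Nd lam mu d = \<Inter>{U. wsubspace U \<and> E_invariant lam mu U \<and>
      (\<forall>k. opI lam mu ((opI lam mu ^^ k) wvec) - wscale d ((opI lam mu ^^ k) wvec) \<in> U)}"

text \<open>Irreducibility of the quotient M_1/N (for N invariant): it is nonzero, and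
  (correspondence theorem) every invariant subspace between N and M_1 is N or M_1.\<close>
definition quot_irreducible_gl :: "(nat \<Rightarrow> complex) \<Rightarrow> (nat \<Rightarrow> complex) \<Rightarrow> wmod set \<Rightarrow> bool" where
  "quot_irreducible_gl lam mu N \<longleftrightarrow> N \<noteq> UNIV \<and>
     (\<forall>U. wsubspace U \<and> N \<subseteq> U \<and> E_invariant lam mu U \<longrightarrow> U = N \<or> U = UNIV)"

definition quot_irreducible_W :: "(nat \<Rightarrow> complex) \<Rightarrow> (nat \<Rightarrow> complex) \<Rightarrow> wmod set \<Rightarrow> bool" where
  "quot_irreducible_W lam mu N \<longleftrightarrow> N \<noteq> UNIV \<and>
     (\<forall>U. wsubspace U \<and> N \<subseteq> U \<and> T_invariant lam mu U \<longrightarrow> U = N \<or> U = UNIV)"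

end

theory Submission imports Defs begin

abbreviation lk where "lk \<equiv> Poly_Mapping.lookup"
abbreviation ks where "ks \<equiv> Poly_Mapping.keys"

lemma lookup_mult_single_left:
  "lk (Poly_Mapping.single b 1 * (p::wmod)) a = Sum_any (\<lambda>q. if a = b + q then lk p q else 0)"
proof -
  have "lk (Poly_Mapping.single b 1 * p) a = Sum_any (\<lambda>l. (if b = l then 1 else 0) * Sum_any (\<lambda>q. if a = l + q then lk p q else 0))"
    by (simp add: Poly_Mapping.lookup_mult Poly_Mapping.lookup_single when_def cong: if_cong)
  also have "(\<lambda>l. (if b = l then 1 else 0) * Sum_any (\<lambda>q. if a = l + q then lk p q else (0::complex)))
     = (\<lambda>l. (if l = b then Sum_any (\<lambda>q. if a = l + q then lk p q else 0) else 0))"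
    by (rule ext) auto
  finally show ?thesis by simp
qed

lemma lookup_wmul_add: "lk (wmul g p) (a + vmono g) = lk p a"
proof -
  have "lk (wmul g p) (a + vmono g) = Sum_any (\<lambda>q. if a + vmono g = vmono g + q then lk p q else 0)"
    unfolding wmul_def by (rule lookup_mult_single_left)
  also have "\<dots> = Sum_any (\<lambda>q. if a = q then lk p q else 0)"
    by (simp add: add.commute)
  finally show ?thesis by simp
qed

lemma lookup_wmul_zero: "lk a g = 0 \<Longrightarrow> lk (wmul g p) a = 0"
proof -
  assume h: "lk a g = 0"
  have "lk (wmul g p) a = Sum_any (\<lambda>q. if a = vmono g + q then lk p q else 0)"
    unfolding wmul_def by (rule lookup_mult_single_left)
  also have "(\<lambda>q. if a = vmono g + q then lk p q else 0) = (\<lambda>q. 0)"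
    using h by (intro ext) (auto simp: Poly_Mapping.lookup_add vmono_def)
  finally show ?thesis by simp
qed

lemma lookup_vmono: "lk (vmono g) h = (if h = g then 1 else 0)"
  by (simp add: vmono_def Poly_Mapping.lookup_single when_def)

lemma vmono_cancel: "lk a g > 0 \<Longrightarrow> a - vmono g + vmono g = a"
  by (rule poly_mapping_eqI) (simp add: Poly_Mapping.lookup_add Poly_Mapping.lookup_minus lookup_vmono)

lemma vmono_cancel2[simp]: "a + vmono g - vmono g = a"
  by (rule poly_mapping_eqI) (simp add: Poly_Mapping.lookup_add Poly_Mapping.lookup_minus lookup_vmono)

lemma lookup_wmul: "lk (wmul g p) a = (if lk a g = 0 then 0 else lk p (a - vmono g))"
proof (cases "lk a g = 0")
  case True then show ?thesis by (simp add: lookup_wmul_zero)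
next
  case False
  then have "a = a - vmono g + vmono g" using vmono_cancel by simp
  then have "lk (wmul g p) a = lk (wmul g p) (a - vmono g + vmono g)" by simp
  also have "\<dots> = lk p (a - vmono g)" by (rule lookup_wmul_add)
  finally show ?thesis using False by simp
qed

lemma lookup_wscale[simp]: "lk (wscale c p) a = c * lk p a"
  unfolding wscale_def by (simp add: Poly_Mapping.map.rep_eq when_def)

lemma lookup_wder: "lk (wder g p) a = of_nat (lk a g + 1) * lk p (a + vmono g)"
proof -
  have inj: "inj (\<lambda>a::wvar \<Rightarrow>\<^sub>0 nat. a + vmono g)" by (rule injI) simp
  have "{a. of_nat (lk a g + 1) * lk p (a + vmono g) \<noteq> (0::complex)} \<subseteq> (\<lambda>a. a + vmono g) -` ks p"
    by (auto simp: Poly_Mapping.in_keys_iff)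
  moreover have "finite ((\<lambda>a. a + vmono g) -` ks p)"
    using inj by (intro finite_vimageI) auto
  ultimately have "finite {a. of_nat (lk a g + 1) * lk p (a + vmono g) \<noteq> (0::complex)}"
    by (rule finite_subset)
  then show ?thesis unfolding wder_def by (simp add: Poly_Mapping.Abs_poly_mapping_inverse)
qed

lemmas lkE = Poly_Mapping.lookup_add Poly_Mapping.lookup_minus lookup_wmul lookup_wder lookup_wscale
  Poly_Mapping.lookup_zero Poly_Mapping.lookup_uminus

lemma wmul_add: "wmul g (p + q) = wmul g p + wmul g q"
  by (rule poly_mapping_eqI) (simp add: lkE)
lemma wder_add: "wder g (p + q) = wder g p + wder g q"
  by (rule poly_mapping_eqI) (simp add: lkE algebra_simps)
lemma wscale_add: "wscale c (p + q) = wscale c p + wscale c q"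
  by (rule poly_mapping_eqI) (simp add: lkE algebra_simps)
lemma wmul_diff: "wmul g (p - q) = wmul g p - wmul g q"
  by (rule poly_mapping_eqI) (simp add: lkE)
lemma wder_diff: "wder g (p - q) = wder g p - wder g q"
  by (rule poly_mapping_eqI) (simp add: lkE algebra_simps)
lemma wscale_diff: "wscale c (p - q) = wscale c p - wscale c q"
  by (rule poly_mapping_eqI) (simp add: lkE algebra_simps)
lemma wmul_scale: "wmul g (wscale c p) = wscale c (wmul g p)"
  by (rule poly_mapping_eqI) (simp add: lkE)
lemma wder_scale: "wder g (wscale c p) = wscale c (wder g p)"
  by (rule poly_mapping_eqI) (simp add: lkE algebra_simps)
lemma wscale_scale: "wscale c (wscale c' p) = wscale (c * c') p"
  by (rule poly_mapping_eqI) (simp add: lkE algebra_simps)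
lemma wscale_one[simp]: "wscale 1 p = p"
  by (rule poly_mapping_eqI) (simp add: lkE)
lemma wscale_zero[simp]: "wscale 0 p = 0"
  by (rule poly_mapping_eqI) (simp add: lkE)
lemma wscale_0[simp]: "wscale c 0 = 0"
  by (rule poly_mapping_eqI) (simp add: lkE)
lemma wmul_0[simp]: "wmul g 0 = 0"
  by (rule poly_mapping_eqI) (simp add: lkE)
lemma wder_0[simp]: "wder g 0 = 0"
  by (rule poly_mapping_eqI) (simp add: lkE)
lemma wscale_distr: "wscale (c + c') p = wscale c p + wscale c' p"
  by (rule poly_mapping_eqI) (simp add: lkE algebra_simps)
lemma wscale_minus1: "wscale (-1) p = - p"
  by (rule poly_mapping_eqI) (simp add: lkE)

lemma opA_add: "opA lam r (p + q) = opA lam r p + opA lam r q"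
  by (simp add: opA_def wmul_add wder_add wscale_add)
lemma opA_scale: "opA lam r (wscale c p) = wscale c (opA lam r p)"
  by (simp add: opA_def wmul_scale wder_scale wscale_scale wscale_add mult.commute)
lemma opAs_add: "opAs mu r (p + q) = opAs mu r p + opAs mu r q"
  by (simp add: opAs_def wmul_add wder_add wscale_add)
lemma opAs_scale: "opAs mu r (wscale c p) = wscale c (opAs mu r p)"
  by (simp add: opAs_def wmul_scale wder_scale wscale_scale wscale_diff mult.commute)
lemma opA_diff: "opA lam r (p - q) = opA lam r p - opA lam r q"
  by (simp add: opA_def wmul_diff wder_diff wscale_diff)
lemma opAs_diff: "opAs mu r (p - q) = opAs mu r p - opAs mu r q"
  by (simp add: opAs_def wmul_diff wder_diff wscale_diff)
lemma opE_add: "opE lam mu i j (p + q) = opE lam mu i j p + opE lam mu i j q"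
  by (simp add: opE_def opA_add opAs_add)
lemma opE_scale: "opE lam mu i j (wscale c p) = wscale c (opE lam mu i j p)"
  by (simp add: opE_def opA_scale opAs_scale)
lemma opE_diff: "opE lam mu i j (p - q) = opE lam mu i j p - opE lam mu i j q"
  by (simp add: opE_def opA_diff opAs_diff)

lemma opA_0[simp]: "opA lam r 0 = 0" by (simp add: opA_def)
lemma opAs_0[simp]: "opAs mu r 0 = 0" by (simp add: opAs_def)
lemma opE_0[simp]: "opE lam mu i j 0 = 0" by (simp add: opE_def)

definition vars :: "wmod \<Rightarrow> wvar set" where "vars p = \<Union> (ks ` ks p)"

lemma finite_vars: "finite (vars p)"
  by (simp add: vars_def)

lemma wder_notvar: "g \<notin> vars p \<Longrightarrow> wder g p = 0"
proof (rule poly_mapping_eqI)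
  fix a assume g: "g \<notin> vars p"
  have "lk p (a + vmono g) = 0"
  proof (rule ccontr)
    assume "lk p (a + vmono g) \<noteq> 0"
    then have "a + vmono g \<in> ks p" by (simp add: Poly_Mapping.in_keys_iff)
    moreover have "g \<in> ks (a + vmono g)" by (simp add: Poly_Mapping.in_keys_iff Poly_Mapping.lookup_add lookup_vmono)
    ultimately show False using g by (auto simp: vars_def)
  qed
  then show "lk (wder g p) a = lk 0 a" by (simp add: lookup_wder)
qed

lemma finite_opE_support:
  assumes lam0: "\<forall>i>n. lam i = 0" and mu0: "\<forall>j>m. mu j = 0"
  shows "finite {j::int. opE lam mu (j - r) j p \<noteq> 0}"
proof -
  let ?V = "vars p"
  let ?B = "{-(\<bar>r\<bar> + int n + 1) .. \<bar>r\<bar> + int m + 1}"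
  let ?A1 = "(\<lambda>k. int k + 1) ` (Cr -` ?V)"
  let ?A2 = "(\<lambda>k. r - int k) ` (Cs -` ?V)"
  have f1: "finite (Cr -` ?V)" by (rule finite_vimageI) (auto simp: finite_vars inj_def)
  have f2: "finite (Cs -` ?V)" by (rule finite_vimageI) (auto simp: finite_vars inj_def)
  have "{j::int. opE lam mu (j - r) j p \<noteq> 0} \<subseteq> ?B \<union> ?A1 \<union> ?A2"
  proof
    fix j assume j: "j \<in> {j::int. opE lam mu (j - r) j p \<noteq> 0}"
    show "j \<in> ?B \<union> ?A1 \<union> ?A2"
    proof (rule ccontr)
      assume nj: "j \<notin> ?B \<union> ?A1 \<union> ?A2"
      then have "j > \<bar>r\<bar> + int m + 1 \<or> j < -(\<bar>r\<bar> + int n + 1)" by auto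
      then show False
      proof
        assume jl: "j > \<bar>r\<bar> + int m + 1"
        have mu: "mu (nat j) = 0" using mu0 jl by auto
        have "Cr (nat j - 1) \<notin> ?V"
        proof
          assume "Cr (nat j - 1) \<in> ?V"
          then have "int (nat j - 1) + 1 \<in> ?A1" by blast
          moreover have "int (nat j - 1) + 1 = j" using jl by auto
          ultimately show False using nj by auto
        qed
        then have "opAs mu j p = 0" using jl mu by (simp add: opAs_def wder_notvar)
        moreover have "opE lam mu (j - r) j p = opA lam (-(j-r)) (opAs mu j p)"
          using jl unfolding opE_def by (subst if_not_P) auto
        ultimately show False using j by simp
      next
        assume jl: "j < -(\<bar>r\<bar> + int n + 1)"
        have lam: "lam (nat (r - j)) = 0" using lam0 jl by auto
        have "Cs (nat (r - j)) \<notin> ?V"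
        proof
          assume "Cs (nat (r - j)) \<in> ?V"
          then have "r - int (nat (r - j)) \<in> ?A2" by blast
          moreover have "r - int (nat (r - j)) = j" using jl by auto
          ultimately show False using nj by auto
        qed
        then have "opA lam (- (j - r)) p = 0" using jl lam by (simp add: opA_def wder_notvar)
        moreover have "opE lam mu (j - r) j p = opAs mu j (opA lam (-(j-r)) p)"
          using jl unfolding opE_def by (subst if_P) auto
        ultimately show False using j by simp
      qed
    qed
  qed
  moreover have "finite (?B \<union> ?A1 \<union> ?A2)" using f1 f2 by auto
  ultimately show ?thesis by (rule finite_subset)
qed

definition var :: "int \<Rightarrow> wvar" where "var j = (if j \<ge> 1 then Cr (nat j - 1) else Cs (nat (-j)))"
definition sg :: "wvar \<Rightarrow> complex" where "sg g = (case g of Cr _ \<Rightarrow> -1 | Cs _ \<Rightarrow> 1)"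
definition chg :: "(wvar \<Rightarrow>\<^sub>0 nat) \<Rightarrow> complex" where "chg a = (\<Sum>g\<in>ks a. sg g * of_nat (lk a g))"
definition Dop :: "wmod \<Rightarrow> wmod" where "Dop p = Abs_poly_mapping (\<lambda>a. chg a * lk p a)"
definition cc :: "(nat \<Rightarrow> complex) \<Rightarrow> (nat \<Rightarrow> complex) \<Rightarrow> int \<Rightarrow> complex" where
  "cc lam mu j = (if j \<ge> 1 then mu (nat j) else lam (nat (-j)))"
definition Lop :: "(nat \<Rightarrow> complex) \<Rightarrow> (nat \<Rightarrow> complex) \<Rightarrow> nat \<Rightarrow> nat \<Rightarrow> wmod \<Rightarrow> wmod" where
  "Lop lam mu n m p = (\<Sum>j\<in>{-int n..int m}. wscale (cc lam mu j) (wmul (var j) p))"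

lemma lookup_Dop: "lk (Dop p) a = chg a * lk p a"
proof -
  have "{a. chg a * lk p a \<noteq> 0} \<subseteq> ks p" by (auto simp: Poly_Mapping.in_keys_iff)
  then have "finite {a. chg a * lk p a \<noteq> 0}" by (rule finite_subset) simp
  then show ?thesis unfolding Dop_def by (simp add: Poly_Mapping.Abs_poly_mapping_inverse)
qed

lemma chg_add: "chg (a + b) = chg a + chg b"
  unfolding chg_def
  by (rule setsum_keys_plus_distrib) (simp_all add: algebra_simps)

lemma chg_vmono: "chg (vmono g) = sg g"
  by (simp add: chg_def vmono_def)

lemma bij_var: "bij var"
proof (rule bijI)
  show "inj var" by (rule injI) (auto simp: var_def split: if_splits)
  show "surj var"
  proof -
    have "g \<in> range var" for g
    proof (cases g)
      case (Cr k) then have "var (int k + 1) = g" by (simp add: var_def)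
      then show ?thesis by (metis rangeI)
    next
      case (Cs k) then have "var (- int k) = g" by (cases k) (auto simp: var_def)
      then show ?thesis by (metis rangeI)
    qed
    then show ?thesis by blast
  qed
qed

lemma lk_opEjj: "lk (opE lam mu j j p) a = cc lam mu j * lk (wmul (var j) p) a + sg (var j) * of_nat (lk a (var j)) * lk p a"
proof (cases "j \<ge> 1")
  case True
  let ?g = "Cr (nat j - 1)"
  have v: "var j = ?g" using True by (simp add: var_def)
  have e: "opE lam mu j j p = wmul ?g (wscale (mu (nat j)) p - wder ?g p)"
    using True unfolding opE_def opA_def opAs_def by (subst if_not_P; simp add: nat_diff_distrib)
  show ?thesis
  proof (cases "lk a ?g = 0")
    case True then show ?thesis using v e by (simp add: lkE)
  next
    case False
    then have c: "vmono ?g + (a - vmono ?g) = a" "a - vmono ?g + vmono ?g = a"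
      using vmono_cancel[of a ?g] by (simp_all add: add.commute)
    have "lk a ?g - 1 + 1 = lk a ?g" using False by simp
    then show ?thesis using v e False \<open>1 \<le> j\<close> c
      by (simp add: lkE cc_def vmono_cancel sg_def Poly_Mapping.lookup_minus lookup_vmono algebra_simps)
  qed
next
  case False
  let ?g = "Cs (nat (-j))"
  have v: "var j = ?g" using False by (simp add: var_def)
  have e: "opE lam mu j j p = wmul ?g (wscale (lam (nat (-j))) p + wder ?g p)"
    using False unfolding opE_def opA_def opAs_def by (subst if_P; simp)
  show ?thesis
  proof (cases "lk a ?g = 0")
    case True then show ?thesis using v e by (simp add: lkE)
  next
    case F2: False
    then have c: "vmono ?g + (a - vmono ?g) = a" "a - vmono ?g + vmono ?g = a"
      using vmono_cancel[of a ?g] by (simp_all add: add.commute)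
    show ?thesis using v e F2 False c
      by (simp add: lkE cc_def vmono_cancel sg_def Poly_Mapping.lookup_minus lookup_vmono algebra_simps)
  qed
qed

lemma lk_Sum_any: "finite {j. F j \<noteq> 0} \<Longrightarrow> lk (Sum_any F) a = Sum_any (\<lambda>j. lk (F j) a)"
proof -
  assume f: "finite {j. F j \<noteq> 0}"
  have "Sum_any F = sum F {j. F j \<noteq> 0}" by (rule Sum_any.expand_set)
  then have "lk (Sum_any F) a = (\<Sum>j\<in>{j. F j \<noteq> 0}. lk (F j) a)" by (simp add: Poly_Mapping.lookup_sum)
  also have "\<dots> = Sum_any (\<lambda>j. lk (F j) a)"
    by (rule Sum_any.expand_superset[symmetric]) (use f in auto)
  finally show ?thesis .
qed

lemma cc_zero:
  assumes lam0: "\<forall>i>n. lam i = 0" and mu0: "\<forall>j>m. mu j = 0"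
  shows "cc lam mu j \<noteq> 0 \<Longrightarrow> -int n \<le> j \<and> j \<le> int m"
proof (rule ccontr)
  assume nz: "cc lam mu j \<noteq> 0" and h: "\<not> (-int n \<le> j \<and> j \<le> int m)"
  show False
  proof (cases "j \<ge> 1")
    case True
    then have "nat j > m" using h by auto
    then show False using nz mu0 True by (simp add: cc_def)
  next
    case False
    then have "nat (-j) > n" using h by auto
    then show False using nz lam0 False by (simp add: cc_def)
  qed
qed

lemma opI_eq:
  assumes lam0: "\<forall>i>n. lam i = 0" and mu0: "\<forall>j>m. mu j = 0"
  shows "opI lam mu p = Lop lam mu n m p + Dop p"
proof (rule poly_mapping_eqI)
  fix a
  let ?X = "\<lambda>j. cc lam mu j * lk (wmul (var j) p) a"
  let ?Y = "\<lambda>j. sg (var j) * of_nat (lk a (var j)) * lk p a"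
  have fin: "finite {j. opE lam mu j j p \<noteq> 0}"
    using finite_opE_support[OF lam0 mu0, of 0 p] by simp
  have fX: "finite {j. ?X j \<noteq> 0}"
    by (rule finite_subset[of _ "{-int n..int m}"]) (use cc_zero[OF lam0 mu0] in force)+
  have injv: "inj var" using bij_var bij_is_inj by blast
  have fY0: "finite {j. sg (var j) * of_nat (lk a (var j)) \<noteq> (0::complex)}"
    by (rule finite_subset[of _ "var -` ks a"]) (auto simp: Poly_Mapping.in_keys_iff injv finite_vimageI)
  have fY: "finite {j. ?Y j \<noteq> 0}"
    by (rule finite_subset[OF _ fY0]) auto
  have "lk (opI lam mu p) a = Sum_any (\<lambda>j. lk (opE lam mu j j p) a)"
    unfolding opI_def by (rule lk_Sum_any[OF fin])
  also have "\<dots> = Sum_any (\<lambda>j. ?X j + ?Y j)" by (simp add: lk_opEjj)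
  also have "\<dots> = Sum_any ?X + Sum_any ?Y" by (rule Sum_any.distrib[OF fX fY])
  also have "Sum_any ?X = (\<Sum>j\<in>{-int n..int m}. ?X j)"
    by (rule Sum_any.expand_superset) (use cc_zero[OF lam0 mu0] in force)+
  also have "\<dots> = lk (Lop lam mu n m p) a"
    by (simp add: Lop_def Poly_Mapping.lookup_sum)
  also have "Sum_any ?Y = Sum_any (\<lambda>j. sg (var j) * of_nat (lk a (var j))) * lk p a"
    by (rule Sum_any_left_distrib[OF fY0, symmetric])
  also have "Sum_any (\<lambda>j. sg (var j) * of_nat (lk a (var j))) = Sum_any (\<lambda>g. sg g * of_nat (lk a g))"
    by (rule Sum_any.reindex_cong[OF bij_var, symmetric]) (simp add: comp_def)
  also have "\<dots> = chg a"
    unfolding chg_def by (rule Sum_any.expand_superset) (auto simp: Poly_Mapping.in_keys_iff)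
  finally show "lk (opI lam mu p) a = lk (Lop lam mu n m p + Dop p) a"
    by (simp add: Poly_Mapping.lookup_add lookup_Dop)
qed

lemma wmul_comm: "wmul g (wmul h p) = wmul h (wmul g p)"
  unfolding wmul_def by (simp add: mult.left_commute)

lemma wmul_sum: "wmul g (sum f S) = sum (\<lambda>j. wmul g (f j)) S"
  unfolding wmul_def by (simp add: sum_distrib_left)

lemma wder_sum: "wder g (sum f S) = sum (\<lambda>j. wder g (f j)) S"
  by (rule poly_mapping_eqI) (simp add: lookup_wder Poly_Mapping.lookup_sum sum_distrib_left)

lemma wscale_sum: "wscale c (sum f S) = sum (\<lambda>j. wscale c (f j)) S"
  by (rule poly_mapping_eqI) (simp add: Poly_Mapping.lookup_sum sum_distrib_left)

lemma leibniz: "wder g (wmul h p) = (if g = h then p else 0) + wmul h (wder g p)"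
proof (rule poly_mapping_eqI)
  fix a
  show "lk (wder g (wmul h p)) a = lk ((if g = h then p else 0) + wmul h (wder g p)) a"
  proof (cases "g = h")
    case True
    show ?thesis
    proof (cases "lk a g = 0")
      case True then show ?thesis using \<open>g = h\<close> by (simp add: lkE lookup_vmono)
    next
      case F: False
      have c: "vmono h + (a - vmono h) = a" "a - vmono h + vmono h = a"
        using vmono_cancel[of a h] F \<open>g = h\<close> by (simp_all add: add.commute)
      show ?thesis using F \<open>g = h\<close> c by (simp add: lkE lookup_vmono algebra_simps)
    qed
  next
    case False
    show ?thesis
    proof (cases "lk a h = 0")
      case True then show ?thesis using False by (simp add: lkE lookup_vmono)
    next
      case F2: False
      have e: "a + vmono g - vmono h = a - vmono h + vmono g"
        using F2 False by (intro poly_mapping_eqI) (simp add: Poly_Mapping.lookup_add Poly_Mapping.lookup_minus lookup_vmono)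
      show ?thesis using F2 False e by (simp add: lkE lookup_vmono)
    qed
  qed
qed

definition cf :: "(nat \<Rightarrow> complex) \<Rightarrow> (nat \<Rightarrow> complex) \<Rightarrow> nat \<Rightarrow> nat \<Rightarrow> wvar \<Rightarrow> complex" where
  "cf lam mu n m g = (\<Sum>j\<in>{-int n..int m}. if var j = g then cc lam mu j else 0)"

lemma Lop_wmul: "Lop lam mu n m (wmul g p) = wmul g (Lop lam mu n m p)"
  by (simp add: Lop_def wmul_sum wmul_scale wmul_comm)

lemma Lop_wder: "wder g (Lop lam mu n m p) = Lop lam mu n m (wder g p) + wscale (cf lam mu n m g) p"
proof -
  have "wder g (Lop lam mu n m p) = (\<Sum>j\<in>{-int n..int m}. wscale (cc lam mu j) ((if g = var j then p else 0) + wmul (var j) (wder g p)))"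
    by (simp add: Lop_def wder_sum wder_scale leibniz)
  also have "\<dots> = (\<Sum>j\<in>{-int n..int m}. wscale (if var j = g then cc lam mu j else 0) p) + Lop lam mu n m (wder g p)"
  proof -
    have "\<And>j. wscale (cc lam mu j) (if g = var j then p else 0) = wscale (if var j = g then cc lam mu j else 0) p"
      by auto
    then show ?thesis by (simp add: Lop_def wscale_add sum.distrib)
  qed
  also have "(\<Sum>j\<in>{-int n..int m}. wscale (if var j = g then cc lam mu j else 0) p) = wscale (cf lam mu n m g) p"
    by (rule poly_mapping_eqI) (simp add: cf_def Poly_Mapping.lookup_sum sum_distrib_right)
  finally show ?thesis by (simp add: add.commute)
qed

lemma Lop_add: "Lop lam mu n m (p + q) = Lop lam mu n m p + Lop lam mu n m q"
  by (simp add: Lop_def wmul_add wscale_add sum.distrib)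
lemma Lop_scale: "Lop lam mu n m (wscale c p) = wscale c (Lop lam mu n m p)"
  by (simp add: Lop_def wmul_scale wscale_scale wscale_sum mult.commute)
lemma Dop_add: "Dop (p + q) = Dop p + Dop q"
  by (rule poly_mapping_eqI) (simp add: lookup_Dop Poly_Mapping.lookup_add algebra_simps)
lemma Dop_scale: "Dop (wscale c p) = wscale c (Dop p)"
  by (rule poly_mapping_eqI) (simp add: lookup_Dop algebra_simps)

lemma Dop_wmul: "Dop (wmul g p) = wmul g (Dop p) + wscale (sg g) (wmul g p)"
proof (rule poly_mapping_eqI)
  fix a
  show "lk (Dop (wmul g p)) a = lk (wmul g (Dop p) + wscale (sg g) (wmul g p)) a"
  proof (cases "lk a g = 0")
    case True then show ?thesis by (simp add: lkE lookup_Dop)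
  next
    case False
    then have "chg a = chg (a - vmono g) + sg g"
      using vmono_cancel[of a g] chg_add[of "a - vmono g" "vmono g"] chg_vmono by simp
    then show ?thesis using False by (simp add: lkE lookup_Dop algebra_simps)
  qed
qed

lemma Dop_wder: "Dop (wder g p) = wder g (Dop p) - wscale (sg g) (wder g p)"
  by (rule poly_mapping_eqI) (simp add: lkE lookup_Dop chg_add chg_vmono algebra_simps)

lemma var_eq_Cs: "var j = Cs k \<longleftrightarrow> j = - int k"
  by (auto simp: var_def)
lemma var_eq_Cr: "var j = Cr k \<longleftrightarrow> j = int k + 1"
  by (auto simp: var_def)

locale wset =
  fixes lam mu :: "nat \<Rightarrow> complex" and n m :: nat
  assumes lam0: "\<forall>i>n. lam i = 0" and mu0: "\<forall>j>m. mu j = 0"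
begin

abbreviation "II \<equiv> opI lam mu"
abbreviation "EE \<equiv> opE lam mu"

lemma II_eq: "II p = Lop lam mu n m p + Dop p"
  by (rule opI_eq[OF lam0 mu0])

lemma cf_Cs: "cf lam mu n m (Cs k) = lam k"
proof -
  have "cf lam mu n m (Cs k) = (\<Sum>j\<in>{-int n..int m}. if j = - int k then cc lam mu j else 0)"
    by (simp add: cf_def var_eq_Cs)
  also have "\<dots> = (if - int k \<in> {-int n..int m} then cc lam mu (- int k) else 0)"
    by (rule sum.delta) simp
  also have "\<dots> = lam k" using lam0 by (auto simp: cc_def)
  finally show ?thesis .
qed

lemma cf_Cr: "cf lam mu n m (Cr k) = mu (k + 1)"
proof -
  have "cf lam mu n m (Cr k) = (\<Sum>j\<in>{-int n..int m}. if j = int k + 1 then cc lam mu j else 0)"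
    by (simp add: cf_def var_eq_Cr)
  also have "\<dots> = (if int k + 1 \<in> {-int n..int m} then cc lam mu (int k + 1) else 0)"
    by (rule sum.delta) simp
  also have "\<dots> = mu (k + 1)" using mu0 by (auto simp: cc_def nat_add_distrib)
  finally show ?thesis .
qed

lemma II_add: "II (p + q) = II p + II q"
  by (simp add: II_eq Lop_add Dop_add algebra_simps)
lemma II_scale: "II (wscale c p) = wscale c (II p)"
  by (simp add: II_eq Lop_scale Dop_scale wscale_add)
lemma II_diff: "II (p - q) = II p - II q"
proof -
  have "II p = II (p - q) + II q" using II_add[of "p - q" q] by simp
  then show ?thesis by simp
qed

lemma II_wmul: "II (wmul g p) = wmul g (II p) + wscale (sg g) (wmul g p)"
  by (simp add: II_eq Lop_wmul Dop_wmul wmul_add algebra_simps)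

lemma II_wder: "II (wder g p) = wder g (II p) - wscale (cf lam mu n m g) p - wscale (sg g) (wder g p)"
  by (simp add: II_eq Lop_wder Dop_wder wder_add algebra_simps)

lemma II_opA: "II (opA lam r p) = opA lam r (II p) - opA lam r p"
proof (cases "r < 0")
  case True then show ?thesis by (simp add: opA_def II_wmul sg_def wscale_minus1)
next
  case False
  then show ?thesis
    by (simp add: opA_def II_add II_scale II_wder cf_Cs sg_def algebra_simps)
qed

lemma II_opAs: "II (opAs mu s p) = opAs mu s (II p) + opAs mu s p"
proof (cases "s \<le> 0")
  case True then show ?thesis by (simp add: opAs_def II_wmul sg_def)
next
  case False
  then have "nat s - 1 + 1 = nat s" by simp
  then show ?thesis using False
    by (simp add: opAs_def II_diff II_scale II_wder cf_Cr sg_def wscale_minus1 algebra_simps)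
qed

lemma II_EE: "II (EE i j p) = EE i j (II p)"
  by (simp add: opE_def II_opA II_opAs opA_add opAs_diff opA_diff opAs_add)

end

definition tdeg :: "(wvar \<Rightarrow>\<^sub>0 nat) \<Rightarrow> nat" where "tdeg a = sum (lk a) (ks a)"
definition mon :: "(wvar \<Rightarrow>\<^sub>0 nat) \<Rightarrow> wmod" where "mon a = Poly_Mapping.single a 1"

lemma tdeg_add: "tdeg (a + b) = tdeg a + tdeg b"
  unfolding tdeg_def by (rule setsum_keys_plus_distrib[where f = "\<lambda>k x. x"]) simp_all

lemma tdeg_vmono[simp]: "tdeg (vmono g) = 1"
  by (simp add: tdeg_def vmono_def)

lemma tdeg_zero_iff: "tdeg a = 0 \<longleftrightarrow> a = 0"
proof
  assume "tdeg a = 0"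
  then have "\<forall>g\<in>ks a. lk a g = 0" unfolding tdeg_def by simp
  then show "a = 0" by (intro poly_mapping_eqI) (auto simp: Poly_Mapping.in_keys_iff)
qed (simp add: tdeg_def)

lemma tdeg_minus: "lk a g > 0 \<Longrightarrow> tdeg (a - vmono g) + 1 = tdeg a"
  using tdeg_add[of "a - vmono g" "vmono g"] vmono_cancel[of a g] by simp

lemma exists_var: "(a::wvar \<Rightarrow>\<^sub>0 nat) \<noteq> 0 \<Longrightarrow> \<exists>g. lk a g > 0"
proof (rule ccontr)
  assume "a \<noteq> 0" "\<not> (\<exists>g. lk a g > 0)"
  then have "\<forall>g. lk a g = 0" by auto
  then have "a = 0" by (intro poly_mapping_eqI) simp
  then show False using \<open>a \<noteq> 0\<close> by simp
qed

lemma lookup_mon: "lk (mon b) a = (if a = b then 1 else 0)"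
  by (simp add: mon_def Poly_Mapping.lookup_single when_def)

lemma wmul_mon: "wmul g (mon b) = mon (b + vmono g)"
  by (simp add: wmul_def mon_def vmono_def Poly_Mapping.mult_single add.commute)

lemma wder_mon: "wder g (mon b) = wscale (of_nat (lk b g)) (mon (b - vmono g))"
proof (rule poly_mapping_eqI)
  fix a
  show "lk (wder g (mon b)) a = lk (wscale (of_nat (lk b g)) (mon (b - vmono g))) a"
  proof (cases "lk b g = 0")
    case True
    have "a + vmono g \<noteq> b"
    proof
      assume "a + vmono g = b"
      then have "lk b g = lk a g + 1" by (auto simp: Poly_Mapping.lookup_add lookup_vmono)
      then show False using True by simp
    qed
    then show ?thesis using True by (simp add: lookup_wder lookup_mon)
  next
    case False
    have iff: "a + vmono g = b \<longleftrightarrow> a = b - vmono g"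
      using vmono_cancel[of b g] False by auto
    show ?thesis
    proof (cases "a = b - vmono g")
      case True
      then have "lk a g + 1 = lk b g" using False by (simp add: Poly_Mapping.lookup_minus lookup_vmono)
      then show ?thesis using True iff by (simp add: lookup_wder lookup_mon flip: of_nat_Suc)
    next
      case F2: False then show ?thesis using iff by (simp add: lookup_wder lookup_mon)
    qed
  qed
qed

lemma poly_expand: "p = (\<Sum>a\<in>ks p. wscale (lk p a) (mon a))"
proof (rule poly_mapping_eqI)
  fix b
  have "lk (\<Sum>a\<in>ks p. wscale (lk p a) (mon a)) b = (\<Sum>a\<in>ks p. if b = a then lk p a else 0)"
    by (simp add: Poly_Mapping.lookup_sum lookup_mon if_distrib cong: if_cong)
  also have "\<dots> = lk p b" by (simp add: Poly_Mapping.in_keys_iff)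
  finally show "lk p b = lk (\<Sum>a\<in>ks p. wscale (lk p a) (mon a)) b" by simp
qed

lemma sub_diff: "wsubspace U \<Longrightarrow> x \<in> U \<Longrightarrow> y \<in> U \<Longrightarrow> x - y \<in> U"
  unfolding wsubspace_def by (metis wscale_minus1 diff_conv_add_uminus)

lemma sub_add: "wsubspace U \<Longrightarrow> x \<in> U \<Longrightarrow> y \<in> U \<Longrightarrow> x + y \<in> U"
  unfolding wsubspace_def by blast

lemma sub_scale: "wsubspace U \<Longrightarrow> x \<in> U \<Longrightarrow> wscale c x \<in> U"
  unfolding wsubspace_def by blast

lemma sub_zero: "wsubspace U \<Longrightarrow> 0 \<in> U"
  unfolding wsubspace_def by blast

lemma sub_sum: "wsubspace U \<Longrightarrow> finite S \<Longrightarrow> (\<forall>j\<in>S. f j \<in> U) \<Longrightarrow> sum f S \<in> U"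
proof -
  assume U: "wsubspace U"
  show "finite S \<Longrightarrow> (\<forall>j\<in>S. f j \<in> U) \<Longrightarrow> sum f S \<in> U"
    by (induction S rule: finite_induct) (auto intro: sub_add[OF U] sub_zero[OF U])
qed

lemma sub_recover: "wsubspace U \<Longrightarrow> wscale c x - z \<in> U \<Longrightarrow> z \<in> U \<Longrightarrow> c \<noteq> 0 \<Longrightarrow> x \<in> U"
proof -
  assume U: "wsubspace U" and h: "wscale c x - z \<in> U" "z \<in> U" "c \<noteq> 0"
  then have "wscale c x \<in> U" using sub_add[OF U h(1) h(2)] by simp
  then have "wscale (1/c) (wscale c x) \<in> U" by (rule sub_scale[OF U])
  then show "x \<in> U" using h(3) by (simp add: wscale_scale)
qed

locale wset2 = wset +
  fixes i0 j0 :: nat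
  assumes lami0: "lam i0 \<noteq> 0" and j0pos: "1 \<le> j0" and muj0: "mu j0 \<noteq> 0"
begin

abbreviation "x0 \<equiv> Cr (j0 - 1)"
abbreviation "y0 \<equiv> Cs i0"

lemma EE_Cr: "EE (int k + 1) (int j0) p = wmul (Cr k) (wscale (mu j0) p - wder x0 p)"
  using j0pos unfolding opE_def opA_def opAs_def by (subst if_not_P) (auto simp: nat_diff_distrib)

lemma EE_Cs: "EE (- int i0) (- int k) p = wmul (Cs k) (wscale (lam i0) p + wder y0 p)"
  unfolding opE_def opA_def opAs_def by (subst if_P) auto

lemma EE_low1: "EE (- int k) (int j0) p = opA lam (int k) (opAs mu (int j0) p)"
  using j0pos unfolding opE_def by (subst if_not_P) auto

lemma EE_low2: "EE (- int i0) (int k + 1) p = opA lam (int i0) (opAs mu (int k + 1) p)"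
  unfolding opE_def by (subst if_not_P) auto

lemma EinvD: "E_invariant lam mu U \<Longrightarrow> x \<in> U \<Longrightarrow> EE i j x \<in> U"
  unfolding E_invariant_def by blast

lemma cyclic:
  assumes U: "wsubspace U" and EU: "E_invariant lam mu U" and w: "wvec \<in> U"
  shows "U = UNIV"
proof -
  have mons: "\<forall>a. tdeg a \<le> N \<longrightarrow> mon a \<in> U" for N
  proof (induction N)
    case 0
    then show ?case using w by (auto simp: tdeg_zero_iff mon_def wvec_def)
  next
    case (Suc N)
    show ?case
    proof (intro allI impI)
      fix a assume a: "tdeg a \<le> Suc N"
      show "mon a \<in> U"
      proof (cases "tdeg a \<le> N")
        case True then show ?thesis using Suc by blast
      next
        case False
        then have ta: "tdeg a = Suc N" using a by simp
        then have "a \<noteq> 0" by (auto simp: tdeg_zero_iff[symmetric])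
        then obtain g where g: "lk a g > 0" using exists_var by blast
        define b where "b = a - vmono g"
        have ab: "a = b + vmono g" using vmono_cancel[OF g] by (simp add: b_def)
        have tb: "tdeg b = N" using tdeg_minus[OF g] ta by (simp add: b_def)
        show ?thesis
        proof (cases g)
          case (Cr k)
          define z where "z = wscale (of_nat (lk b x0)) (mon (b - vmono x0 + vmono g))"
          have z: "z \<in> U"
          proof (cases "lk b x0 = 0")
            case True then show ?thesis using sub_zero[OF U] by (simp add: z_def)
          next
            case False
            then have "tdeg (b - vmono x0 + vmono g) = N"
              using tdeg_minus[of b x0] tdeg_add[of "b - vmono x0" "vmono g"] tb by simp
            then have "mon (b - vmono x0 + vmono g) \<in> U" using Suc by simp
            then show ?thesis unfolding z_def by (rule sub_scale[OF U])
          qed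
          have "EE (int k + 1) (int j0) (mon b) = wscale (mu j0) (mon a) - z"
            unfolding EE_Cr z_def using Cr ab by (simp add: wmul_diff wmul_scale wder_mon wmul_mon)
          moreover have "EE (int k + 1) (int j0) (mon b) \<in> U"
            using Suc tb by (intro EinvD[OF EU]) simp
          ultimately show ?thesis using sub_recover[OF U _ z muj0] by simp
        next
          case (Cs k)
          define z where "z = wscale (of_nat (lk b y0)) (mon (b - vmono y0 + vmono g))"
          have z: "z \<in> U"
          proof (cases "lk b y0 = 0")
            case True then show ?thesis using sub_zero[OF U] by (simp add: z_def)
          next
            case False
            then have "tdeg (b - vmono y0 + vmono g) = N"
              using tdeg_minus[of b y0] tdeg_add[of "b - vmono y0" "vmono g"] tb by simp
            then have "mon (b - vmono y0 + vmono g) \<in> U" using Suc by simp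
            then show ?thesis unfolding z_def by (rule sub_scale[OF U])
          qed
          have "EE (- int i0) (- int k) (mon b) = wscale (lam i0) (mon a) - (- z)"
            unfolding EE_Cs z_def using Cs ab by (simp add: wmul_add wmul_scale wder_mon wmul_mon)
          moreover have "EE (- int i0) (- int k) (mon b) \<in> U"
            using Suc tb by (intro EinvD[OF EU]) simp
          moreover have "- z \<in> U" using sub_scale[OF U z, of "-1"] by (simp add: wscale_minus1)
          ultimately show ?thesis using sub_recover[OF U _ _ lami0] by metis
        qed
      qed
    qed
  qed
  show ?thesis
  proof (rule set_eqI, rule iffI)
    fix p :: wmod
    show "p \<in> U"
    proof -
      have "(\<Sum>a\<in>ks p. wscale (lk p a) (mon a)) \<in> U"
        using mons by (intro sub_sum[OF U]) (auto intro: sub_scale[OF U])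
      then show ?thesis using poly_expand[of p] by simp
    qed
  qed simp
qed

definition Pd :: "complex \<Rightarrow> wmod \<Rightarrow> wmod" where "Pd d t = II t - wscale d t"

lemma Pd_add: "Pd d (p + q) = Pd d p + Pd d q"
  by (simp add: Pd_def II_add wscale_add)
lemma Pd_scale: "Pd d (wscale c p) = wscale c (Pd d p)"
  by (simp add: Pd_def II_scale wscale_scale wscale_diff mult.commute)
lemma Pd_EE: "EE i j (Pd d p) = Pd d (EE i j p)"
  by (simp add: Pd_def opE_diff opE_scale II_EE)
lemma Pd_0[simp]: "Pd d 0 = 0"
  using Pd_scale[of d 0 0] by simp

lemma range_Pd_sub: "wsubspace (range (Pd d))"
  unfolding wsubspace_def
proof (intro conjI ballI allI)
  show "0 \<in> range (Pd d)" using Pd_0[of d] by (metis rangeI)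
  fix x y assume "x \<in> range (Pd d)" "y \<in> range (Pd d)"
  then obtain p q where "x = Pd d p" "y = Pd d q" by blast
  then have "x + y = Pd d (p + q)" by (simp add: Pd_add)
  then show "x + y \<in> range (Pd d)" by simp
next
  fix c x assume "x \<in> range (Pd d)"
  then obtain p where "x = Pd d p" by blast
  then have "wscale c x = Pd d (wscale c p)" by (simp add: Pd_scale)
  then show "wscale c x \<in> range (Pd d)" by simp
qed

lemma range_Pd_inv: "E_invariant lam mu (range (Pd d))"
  unfolding E_invariant_def
proof (intro allI ballI)
  fix i j x assume "x \<in> range (Pd d)"
  then obtain p where "x = Pd d p" by blast
  then have "EE i j x = Pd d (EE i j p)" by (simp add: Pd_EE)
  then show "EE i j x \<in> range (Pd d)" by simp
qed

lemma Nd_sub_range: "Nd lam mu d \<subseteq> range (Pd d)"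
  unfolding Nd_def
proof (rule Inter_lower, simp, intro conjI allI)
  show "wsubspace (range (Pd d))" by (rule range_Pd_sub)
  show "E_invariant lam mu (range (Pd d))" by (rule range_Pd_inv)
  fix k show "II ((II ^^ k) wvec) - wscale d ((II ^^ k) wvec) \<in> range (Pd d)"
    by (metis Pd_def rangeI)
qed

lemma Nd_props: "wsubspace (Nd lam mu d)" "E_invariant lam mu (Nd lam mu d)"
  "Pd d wvec \<in> Nd lam mu d"
proof -
  show "wsubspace (Nd lam mu d)" unfolding Nd_def wsubspace_def by blast
  show "E_invariant lam mu (Nd lam mu d)" unfolding Nd_def E_invariant_def by blast
  have "II ((II ^^ 0) wvec) - wscale d ((II ^^ 0) wvec) \<in> Nd lam mu d" unfolding Nd_def by blast
  then show "Pd d wvec \<in> Nd lam mu d" by (simp add: Pd_def)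
qed

lemma Pd_in_Nd: "Pd d t \<in> Nd lam mu d"
proof -
  let ?S = "{t. Pd d t \<in> Nd lam mu d}"
  have S: "wsubspace ?S"
    unfolding wsubspace_def using Nd_props(1)
    by (auto simp: Pd_add Pd_scale intro: sub_add sub_scale sub_zero)
  have "E_invariant lam mu ?S"
    unfolding E_invariant_def using Nd_props(2) by (auto simp flip: Pd_EE intro: EinvD)
  then have "?S = UNIV" using cyclic[OF S] Nd_props(3) by blast
  then show ?thesis by blast
qed

lemma lk_add_vmono: "lk (b + vmono g) h = lk b h + (if h = g then 1 else 0)"
  by (simp add: Poly_Mapping.lookup_add lookup_vmono)

lemma tdeg_add_vmono[simp]: "tdeg (b + vmono g) = tdeg b + 1"
  by (simp add: tdeg_add)

lemma j0_le_m: "j0 \<le> m"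
  using mu0 muj0 by (metis not_le)

lemma Pd_high:
  assumes t: "\<forall>b\<in>ks t. tdeg b \<le> N"
  shows "tdeg a > N + 1 \<Longrightarrow> lk (Pd d t) a = 0"
    and "tdeg a = N + 1 \<Longrightarrow> (\<forall>b\<in>ks t. tdeg b = N \<longrightarrow> lk b x0 < lk a x0) \<Longrightarrow>
         lk (Pd d t) a = (if lk a x0 > 0 then mu j0 * lk t (a - vmono x0) else 0)"
proof -
  have zero: "lk t b = 0" if "tdeg b > N" for b
    using t that by (meson Poly_Mapping.in_keys_iff not_le)
  have lkP: "lk (Pd d t) a = (\<Sum>j\<in>{-int n..int m}. cc lam mu j * lk (wmul (var j) t) a) + chg a * lk t a - d * lk t a"
    by (simp add: Pd_def II_eq Lop_def Poly_Mapping.lookup_sum Poly_Mapping.lookup_add Poly_Mapping.lookup_minus lookup_Dop)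
  {
    assume a: "tdeg a > N + 1"
    have "lk (wmul (var j) t) a = 0" for j
    proof (cases "lk a (var j) = 0")
      case False
      then have "tdeg (a - vmono (var j)) > N" using tdeg_minus[of a "var j"] a by simp
      then show ?thesis using False zero by (simp add: lookup_wmul)
    qed (simp add: lookup_wmul)
    then show "lk (Pd d t) a = 0" using lkP zero a by simp
  }
  {
    assume a: "tdeg a = N + 1" and x: "\<forall>b\<in>ks t. tdeg b = N \<longrightarrow> lk b x0 < lk a x0"
    have trm: "cc lam mu j * lk (wmul (var j) t) a =
      (if j = int j0 then (if lk a x0 > 0 then mu j0 * lk t (a - vmono x0) else 0) else 0)" for j
    proof (cases "lk a (var j) = 0")
      case True
      then show ?thesis using j0pos by (auto simp: lookup_wmul var_def)
    next
      case False
      have tb: "tdeg (a - vmono (var j)) = N" using tdeg_minus[of a "var j"] a False by simp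
      show ?thesis
      proof (cases "j = int j0")
        case True
        then have "var j = x0" using j0pos by (simp add: var_def nat_diff_distrib)
        then show ?thesis using True False j0pos by (simp add: lookup_wmul cc_def)
      next
        case F2: False
        then have "var j \<noteq> x0" using j0pos by (auto simp: var_eq_Cr)
        then have "lk (a - vmono (var j)) x0 = lk a x0"
          by (simp add: Poly_Mapping.lookup_minus lookup_vmono)
        then have "lk t (a - vmono (var j)) = 0" using x tb by (metis Poly_Mapping.in_keys_iff less_irrefl)
        then show ?thesis using F2 by (simp add: lookup_wmul)
      qed
    qed
    have "(\<Sum>j\<in>{-int n..int m}. cc lam mu j * lk (wmul (var j) t) a) =
      (\<Sum>j\<in>{-int n..int m}. if j = int j0 then (if lk a x0 > 0 then mu j0 * lk t (a - vmono x0) else 0) else 0)"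
      by (rule sum.cong) (simp_all add: trm)
    also have "\<dots> = (if lk a x0 > 0 then mu j0 * lk t (a - vmono x0) else 0)"
      using j0_le_m by (subst sum.delta) auto
    finally show "lk (Pd d t) a = (if lk a x0 > 0 then mu j0 * lk t (a - vmono x0) else 0)"
      using lkP zero a by simp
  }
qed

lemma lookup_wvec: "lk wvec a = (if a = 0 then 1 else 0)"
  by (simp add: wvec_def Poly_Mapping.lookup_one when_def)

lemma wvec_notin: "wvec \<notin> range (Pd d)"
proof
  assume "wvec \<in> range (Pd d)"
  then obtain t where wt: "wvec = Pd d t" by blast
  have "t \<noteq> 0"
  proof
    assume "t = 0"
    then have "wvec = 0" using wt by simp
    then have "lk wvec 0 = 0" by simp
    then show False by (simp add: lookup_wvec)
  qed
  then have Kne: "ks t \<noteq> {}" by simp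
  define N where "N = Max (tdeg ` ks t)"
  have tN: "\<forall>b\<in>ks t. tdeg b \<le> N" unfolding N_def by simp
  have "N \<in> tdeg ` ks t" unfolding N_def using Kne by (intro Max_in) auto
  then have Sne: "{b\<in>ks t. tdeg b = N} \<noteq> {}" by auto
  define M where "M = Max ((\<lambda>b. lk b x0) ` {b\<in>ks t. tdeg b = N})"
  have "M \<in> (\<lambda>b. lk b x0) ` {b\<in>ks t. tdeg b = N}" unfolding M_def using Sne by (intro Max_in) auto
  then obtain a0 where a0: "a0 \<in> ks t" "tdeg a0 = N" "lk a0 x0 = M" by auto
  have Mb: "\<forall>b\<in>ks t. tdeg b = N \<longrightarrow> lk b x0 \<le> M" unfolding M_def by simp
  define a where "a = a0 + vmono x0"
  have ta: "tdeg a = N + 1" using a0 by (simp add: a_def)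
  have ax: "lk a x0 = M + 1" using a0 by (simp add: a_def lk_add_vmono)
  have hb: "\<forall>b\<in>ks t. tdeg b = N \<longrightarrow> lk b x0 < lk a x0" using Mb ax by (simp add: less_Suc_eq_le)
  have "lk (Pd d t) a = (if lk a x0 > 0 then mu j0 * lk t (a - vmono x0) else 0)"
    by (rule Pd_high(2)[OF tN ta hb])
  then have "lk (Pd d t) a = mu j0 * lk t a0" using ax by (simp add: a_def)
  moreover have "lk t a0 \<noteq> 0" using a0 by (simp add: Poly_Mapping.in_keys_iff)
  moreover have "a \<noteq> 0" using ta by (auto simp: tdeg_zero_iff[symmetric])
  ultimately show False using wt muj0 by (simp add: lookup_wvec)
qed

lemma Nd_ne: "Nd lam mu d \<noteq> UNIV"
  using wvec_notin Nd_sub_range by blast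

lemma lk_low:
  assumes "j \<ge> 1"
  shows "lk (opA lam (int k) (opAs mu (int j) p) - wscale (lam k * mu j) p) b =
   - lam k * of_nat (lk b (Cr (j-1)) + 1) * lk p (b + vmono (Cr (j-1)))
   + of_nat (lk b (Cs k) + 1) * (mu j * lk p (b + vmono (Cs k))
      - of_nat (lk (b + vmono (Cs k)) (Cr (j-1)) + 1) * lk p (b + vmono (Cs k) + vmono (Cr (j-1))))"
  using assms by (simp add: opA_def opAs_def lkE algebra_simps)

lemma one_plus_nat_nz[simp]: "(1::complex) + of_nat x \<noteq> 0"
proof -
  have "of_nat (Suc x) \<noteq> (0::complex)" by (simp only: of_nat_eq_0_iff)
  then show ?thesis by simp
qed

lemma nat_plus_one_nz[simp]: "of_nat x + (1::complex) \<noteq> 0"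
  by (metis one_plus_nat_nz add.commute)

definition good :: "wmod \<Rightarrow> nat \<Rightarrow> bool" where
  "good r N \<longleftrightarrow> (\<forall>a\<in>ks r. tdeg a \<le> N) \<and> (\<exists>a\<in>ks r. tdeg a = N) \<and> (\<forall>a\<in>ks r. tdeg a = N \<longrightarrow> lk a x0 = 0)"

lemma nk: "a \<notin> ks r \<Longrightarrow> lk r a = 0"
  by (simp add: Poly_Mapping.in_keys_iff)

lemma lower:
  assumes U: "wsubspace U" and EU: "E_invariant lam mu U"
  shows "\<forall>r. r \<in> U \<longrightarrow> good r N \<longrightarrow> wvec \<in> U"
proof (induction N)
  case 0
  show ?case
  proof (intro allI impI)
    fix r assume rU: "r \<in> U" and g: "good r 0"
    then have k0: "\<forall>a\<in>ks r. a = 0" by (auto simp: good_def tdeg_zero_iff)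
    have "0 \<in> ks r" using g k0 by (auto simp: good_def)
    then have c: "lk r 0 \<noteq> 0" by (simp add: Poly_Mapping.in_keys_iff)
    have "wvec = wscale (1 / lk r 0) r"
    proof (rule poly_mapping_eqI)
      fix a show "lk wvec a = lk (wscale (1 / lk r 0) r) a"
        using c k0 nk[of a r] by (cases "a = 0") (auto simp: lookup_wvec)
    qed
    moreover have "wscale (1 / lk r 0) r \<in> U" by (rule sub_scale[OF U rU])
    ultimately show "wvec \<in> U" by (rule ssubst)
  qed
next
  case (Suc N)
  show ?case
  proof (intro allI impI)
    fix r assume rU: "r \<in> U" and g: "good r (Suc N)"
    have z1: "lk r c = 0" if "tdeg c > Suc N" for c
      using g that nk[of c r] by (auto simp: good_def) (meson not_le)
    have z2: "lk r c = 0" if "tdeg c = Suc N" "lk c x0 > 0" for c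
      using g that nk[of c r] by (auto simp: good_def)
    show "wvec \<in> U"
    proof (cases "\<exists>a k. a \<in> ks r \<and> tdeg a = Suc N \<and> lk a (Cs k) > 0")
      case True
      then obtain a k where a: "a \<in> ks r" "tdeg a = Suc N" "lk a (Cs k) > 0" by blast
      let ?y = "Cs k"
      define r' where "r' = EE (- int k) (int j0) r - wscale (lam k * mu j0) r"
      have r'U: "r' \<in> U" unfolding r'_def
        by (rule sub_diff[OF U EinvD[OF EU rU] sub_scale[OF U rU]])
      have lk': "lk r' b = - lam k * of_nat (lk b x0 + 1) * lk r (b + vmono x0)
        + of_nat (lk b ?y + 1) * (mu j0 * lk r (b + vmono ?y)
        - of_nat (lk (b + vmono ?y) x0 + 1) * lk r (b + vmono ?y + vmono x0))" for b
        unfolding r'_def EE_low1 by (rule lk_low[OF j0pos])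
      have yx: "?y \<noteq> x0" by simp
      have "good r' N" unfolding good_def
      proof (intro conjI ballI impI)
        fix b assume "b \<in> ks r'"
        then have "lk r' b \<noteq> 0" by (simp add: Poly_Mapping.in_keys_iff)
        show "tdeg b \<le> N"
        proof (rule ccontr)
          assume "\<not> tdeg b \<le> N"
          then have "lk r (b + vmono x0) = 0" "lk r (b + vmono ?y) = 0" "lk r (b + vmono ?y + vmono x0) = 0"
            by (auto intro!: z1)
          then have "lk r' b = 0" using lk'[of b] by simp
          then show False using \<open>lk r' b \<noteq> 0\<close> by simp
        qed
      next
        define b where "b = a - vmono ?y"
        have ab: "b + vmono ?y = a" using vmono_cancel[OF a(3)] by (simp add: b_def)
        have tb: "tdeg b = N" using tdeg_minus[OF a(3)] a(2) by (simp add: b_def)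
        have "lk r (b + vmono x0) = 0" using tb by (intro z2) (simp_all add: lk_add_vmono)
        moreover have "lk r (b + vmono ?y + vmono x0) = 0" using tb by (intro z1) simp
        moreover have "lk r a \<noteq> 0" using a(1) by (simp add: Poly_Mapping.in_keys_iff)
        ultimately have "lk r' b \<noteq> 0" using lk'[of b] ab muj0 by simp
        then show "\<exists>b\<in>ks r'. tdeg b = N" using tb by (auto simp: Poly_Mapping.in_keys_iff)
      next
        fix b assume b: "b \<in> ks r'" "tdeg b = N"
        show "lk b x0 = 0"
        proof (rule ccontr)
          assume "lk b x0 \<noteq> 0"
          then have bx: "lk b x0 > 0" by simp
          have "lk r (b + vmono x0) = 0" using b(2) bx by (intro z2) (simp_all add: lk_add_vmono)
          moreover have "lk r (b + vmono ?y) = 0" using b(2) bx by (intro z2) (simp_all add: lk_add_vmono)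
          moreover have "lk r (b + vmono ?y + vmono x0) = 0" using b(2) by (intro z1) simp
          ultimately have "lk r' b = 0" using lk'[of b] by simp
          then show False using b(1) by (simp add: Poly_Mapping.in_keys_iff)
        qed
      qed
      then show "wvec \<in> U" using Suc r'U by blast
    next
      case False
      then have noCs: "\<And>a k. a \<in> ks r \<Longrightarrow> tdeg a = Suc N \<Longrightarrow> lk a (Cs k) = 0" by auto
      obtain a where a: "a \<in> ks r" "tdeg a = Suc N" using g by (auto simp: good_def)
      have ax: "lk a x0 = 0" using g a by (auto simp: good_def)
      have "a \<noteq> 0" using a(2) by (auto simp: tdeg_zero_iff[symmetric])
      then obtain gv where gv: "lk a gv > 0" using exists_var by blast
      then obtain k where gk: "gv = Cr k" using noCs[OF a] by (cases gv) auto
      have kj: "k \<noteq> j0 - 1" using gv ax gk by auto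
      let ?g = "Cr k"
      define r' where "r' = EE (- int i0) (int k + 1) r - wscale (lam i0 * mu (k + 1)) r"
      have r'U: "r' \<in> U" unfolding r'_def
        by (rule sub_diff[OF U EinvD[OF EU rU] sub_scale[OF U rU]])
      have lk': "lk r' b = - lam i0 * of_nat (lk b ?g + 1) * lk r (b + vmono ?g)
        + of_nat (lk b y0 + 1) * (mu (k + 1) * lk r (b + vmono y0)
        - of_nat (lk (b + vmono y0) ?g + 1) * lk r (b + vmono y0 + vmono ?g))" for b
        using lk_low[of "k + 1" i0 r b] unfolding r'_def EE_low2 by (simp add: add.commute)
      have "good r' N" unfolding good_def
      proof (intro conjI ballI impI)
        fix b assume "b \<in> ks r'"
        then have "lk r' b \<noteq> 0" by (simp add: Poly_Mapping.in_keys_iff)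
        show "tdeg b \<le> N"
        proof (rule ccontr)
          assume "\<not> tdeg b \<le> N"
          then have "lk r (b + vmono ?g) = 0" "lk r (b + vmono y0) = 0" "lk r (b + vmono y0 + vmono ?g) = 0"
            by (auto intro!: z1)
          then have "lk r' b = 0" using lk'[of b] by simp
          then show False using \<open>lk r' b \<noteq> 0\<close> by simp
        qed
      next
        define b where "b = a - vmono ?g"
        have ab: "b + vmono ?g = a" using vmono_cancel[of a ?g] gv gk by (simp add: b_def)
        have tb: "tdeg b = N" using tdeg_minus[of a ?g] gv gk a(2) by (simp add: b_def)
        have "lk r (b + vmono y0) = 0"
        proof -
          have "b + vmono y0 \<notin> ks r"
          proof
            assume "b + vmono y0 \<in> ks r"
            then have "lk (b + vmono y0) y0 = 0" using noCs tb by simp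
            then show False by (simp add: lk_add_vmono)
          qed
          then show ?thesis by (rule nk)
        qed
        moreover have "lk r (b + vmono y0 + vmono ?g) = 0" using tb by (intro z1) simp
        moreover have "lk r a \<noteq> 0" using a(1) by (simp add: Poly_Mapping.in_keys_iff)
        ultimately have "lk r' b \<noteq> 0" using lk'[of b] ab lami0 by simp
        then show "\<exists>b\<in>ks r'. tdeg b = N" using tb by (auto simp: Poly_Mapping.in_keys_iff)
      next
        fix b assume b: "b \<in> ks r'" "tdeg b = N"
        show "lk b x0 = 0"
        proof (rule ccontr)
          assume "lk b x0 \<noteq> 0"
          then have bx: "lk b x0 > 0" by simp
          have "lk r (b + vmono ?g) = 0" using b(2) bx kj by (intro z2) (simp_all add: lk_add_vmono)
          moreover have "lk r (b + vmono y0) = 0" using b(2) bx by (intro z2) (simp_all add: lk_add_vmono)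
          moreover have "lk r (b + vmono y0 + vmono ?g) = 0" using b(2) by (intro z1) simp
          ultimately have "lk r' b = 0" using lk'[of b] by simp
          then show False using b(1) by (simp add: Poly_Mapping.in_keys_iff)
        qed
      qed
      then show "wvec \<in> U" using Suc r'U by blast
    qed
  qed
qed

lemma lk_le_tdeg: "lk a g \<le> tdeg a"
proof (cases "g \<in> ks a")
  case True then show ?thesis unfolding tdeg_def by (intro member_le_sum) auto
next
  case False then show ?thesis by (simp add: Poly_Mapping.in_keys_iff)
qed

lemma sum_bound_x0: "\<forall>a\<in>ks v. lk a x0 < Suc (\<Sum>b\<in>ks v. lk b x0)"
proof
  fix a assume "a \<in> ks v"
  then have "lk a x0 \<le> (\<Sum>b\<in>ks v. lk b x0)" by (intro member_le_sum) auto
  then show "lk a x0 < Suc (\<Sum>b\<in>ks v. lk b x0)" by simp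
qed

lemma reduce:
  assumes U: "wsubspace U" and NU: "Nd lam mu d \<subseteq> U"
  shows "\<forall>M v. v \<in> U \<longrightarrow> v \<notin> Nd lam mu d \<longrightarrow> (\<forall>a\<in>ks v. tdeg a \<le> N) \<longrightarrow>
     (\<forall>a\<in>ks v. tdeg a = N \<longrightarrow> lk a x0 < M) \<longrightarrow> (\<exists>r N'. r \<in> U \<and> good r N')"
proof (induction N rule: less_induct)
  case (less N)
  note outer = less.IH
  show ?case
  proof (rule allI)
    fix M
    show "\<forall>v. v \<in> U \<longrightarrow> v \<notin> Nd lam mu d \<longrightarrow> (\<forall>a\<in>ks v. tdeg a \<le> N) \<longrightarrow>
     (\<forall>a\<in>ks v. tdeg a = N \<longrightarrow> lk a x0 < M) \<longrightarrow> (\<exists>r N'. r \<in> U \<and> good r N')"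
    proof (induction M rule: less_induct)
      case (less M)
      note inner = less.IH
      show ?case
      proof (intro allI impI)
        fix v assume vU: "v \<in> U" and vN: "v \<notin> Nd lam mu d" and vd: "\<forall>a\<in>ks v. tdeg a \<le> N"
          and vx: "\<forall>a\<in>ks v. tdeg a = N \<longrightarrow> lk a x0 < M"
        show "\<exists>r N'. r \<in> U \<and> good r N'"
        proof (cases "\<forall>a\<in>ks v. tdeg a = N \<longrightarrow> lk a x0 = 0")
          case True
          show ?thesis
          proof (cases "\<exists>a\<in>ks v. tdeg a = N")
            case True
            then have "good v N" using vd \<open>\<forall>a\<in>ks v. tdeg a = N \<longrightarrow> lk a x0 = 0\<close> by (simp add: good_def)
            then show ?thesis using vU by blast
          next
            case False
            then have lt: "\<forall>a\<in>ks v. tdeg a < N" using vd by (auto simp: order.order_iff_strict)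
            have "N \<noteq> 0"
            proof
              assume "N = 0"
              then have "ks v = {}" using lt by auto
              then have "v = 0" by simp
              then show False using vN sub_zero[OF Nd_props(1)] by simp
            qed
            then obtain N1 where N1: "N = Suc N1" by (cases N) auto
            have "\<forall>a\<in>ks v. tdeg a \<le> N1" using lt N1 by auto
            moreover have "\<forall>a\<in>ks v. tdeg a = N1 \<longrightarrow> lk a x0 < Suc (\<Sum>b\<in>ks v. lk b x0)"
              using sum_bound_x0[of v] by blast
            ultimately show ?thesis using outer[of N1] N1 vU vN by blast
          qed
        next
          case False
          then obtain a0 where a0: "a0 \<in> ks v" "tdeg a0 = N" "lk a0 x0 > 0" by auto
          have M2: "M \<ge> 2" using vx a0 by fastforce
          have "N \<ge> 1" using lk_le_tdeg[of a0 x0] a0 by simp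
          then obtain N1 where N1: "N = Suc N1" by (cases N) auto
          define tf where "tf = (\<lambda>b. if tdeg b = N1 then lk v (b + vmono x0) / mu j0 else 0)"
          have "{b. tf b \<noteq> 0} \<subseteq> (\<lambda>b. b + vmono x0) -` ks v"
            by (auto simp: tf_def Poly_Mapping.in_keys_iff split: if_splits)
          moreover have "finite ((\<lambda>b. b + vmono x0) -` ks v)"
            by (rule finite_vimageI) (auto simp: inj_def)
          ultimately have ftf: "finite {b. tf b \<noteq> 0}" by (rule finite_subset)
          define t where "t = Abs_poly_mapping tf"
          have lkt: "lk t b = tf b" for b
            unfolding t_def using ftf by (simp add: Poly_Mapping.Abs_poly_mapping_inverse)
          have tk: "\<forall>b\<in>ks t. tdeg b \<le> N1"
            by (auto simp: Poly_Mapping.in_keys_iff lkt tf_def split: if_splits)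
          define v' where "v' = v - Pd d t"
          have PN: "Pd d t \<in> Nd lam mu d" by (rule Pd_in_Nd)
          have v'U: "v' \<in> U" unfolding v'_def using sub_diff[OF U vU] NU PN by blast
          have v'N: "v' \<notin> Nd lam mu d"
          proof
            assume "v' \<in> Nd lam mu d"
            then have "v' + Pd d t \<in> Nd lam mu d" using sub_add[OF Nd_props(1)] PN by blast
            then show False using vN by (simp add: v'_def)
          qed
          have v'd: "\<forall>a\<in>ks v'. tdeg a \<le> N"
          proof
            fix a assume a: "a \<in> ks v'"
            show "tdeg a \<le> N"
            proof (rule ccontr)
              assume "\<not> tdeg a \<le> N"
              then have "tdeg a > N1 + 1" using N1 by simp
              then have "lk (Pd d t) a = 0" "lk v a = 0"
                using Pd_high(1)[OF tk] vd nk[of a v] \<open>\<not> tdeg a \<le> N\<close> by auto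
              then have "lk v' a = 0" by (simp add: v'_def Poly_Mapping.lookup_minus)
              then show False using a by (simp add: Poly_Mapping.in_keys_iff)
            qed
          qed
          have v'x: "\<forall>a\<in>ks v'. tdeg a = N \<longrightarrow> lk a x0 < M - 1"
          proof (intro ballI impI)
            fix a assume a: "a \<in> ks v'" and ta: "tdeg a = N"
            show "lk a x0 < M - 1"
            proof (rule ccontr)
              assume "\<not> lk a x0 < M - 1"
              then have ax: "lk a x0 \<ge> M - 1" by simp
              then have ax0: "lk a x0 > 0" using M2 by simp
              have hb: "\<forall>b\<in>ks t. tdeg b = N1 \<longrightarrow> lk b x0 < lk a x0"
              proof (intro ballI impI)
                fix b assume b: "b \<in> ks t" "tdeg b = N1"
                then have "lk v (b + vmono x0) \<noteq> 0" by (auto simp: Poly_Mapping.in_keys_iff lkt tf_def)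
                then have "b + vmono x0 \<in> ks v" by (simp add: Poly_Mapping.in_keys_iff)
                then have "lk (b + vmono x0) x0 < M" using vx b(2) N1 by simp
                then show "lk b x0 < lk a x0" using ax by (simp add: lk_add_vmono)
              qed
              have ta1: "tdeg a = N1 + 1" using ta N1 by simp
              have "lk (Pd d t) a = mu j0 * lk t (a - vmono x0)"
                using Pd_high(2)[OF tk ta1 hb] ax0 by simp
              also have "lk t (a - vmono x0) = lk v a / mu j0"
                using tdeg_minus[OF ax0] ta1 vmono_cancel[OF ax0] by (simp add: lkt tf_def)
              finally have "lk (Pd d t) a = lk v a" using muj0 by simp
              then have "lk v' a = 0" by (simp add: v'_def Poly_Mapping.lookup_minus)
              then show False using a by (simp add: Poly_Mapping.in_keys_iff)
            qed
          qed
          have "M - 1 < M" using M2 by simp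
          then show ?thesis using inner[of "M - 1"] v'U v'N v'd v'x by blast
        qed
      qed
    qed
  qed
qed

lemma reduce_final:
  assumes U: "wsubspace U" and NU: "Nd lam mu d \<subseteq> U" and vU: "v \<in> U" and vN: "v \<notin> Nd lam mu d"
  shows "\<exists>r N'. r \<in> U \<and> good r N'"
proof -
  have "\<forall>a\<in>ks v. tdeg a \<le> (\<Sum>b\<in>ks v. tdeg b)" by (auto simp: member_le_sum)
  moreover have "\<forall>a\<in>ks v. tdeg a = (\<Sum>b\<in>ks v. tdeg b) \<longrightarrow> lk a x0 < Suc (\<Sum>b\<in>ks v. lk b x0)"
    using sum_bound_x0[of v] by blast
  ultimately show ?thesis using reduce[OF U NU] vU vN by blast
qed

lemma irr_gl: "quot_irreducible_gl lam mu (Nd lam mu d)"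
  unfolding quot_irreducible_gl_def
proof (intro conjI allI impI)
  show "Nd lam mu d \<noteq> UNIV" by (rule Nd_ne)
  fix U assume h: "wsubspace U \<and> Nd lam mu d \<subseteq> U \<and> E_invariant lam mu U"
  then have U: "wsubspace U" and NU: "Nd lam mu d \<subseteq> U" and EU: "E_invariant lam mu U" by auto
  show "U = Nd lam mu d \<or> U = UNIV"
  proof (cases "U = Nd lam mu d")
    case False
    then obtain v where "v \<in> U" "v \<notin> Nd lam mu d" using NU by blast
    then obtain r N where "r \<in> U" "good r N" using reduce_final[OF U NU] by blast
    then have "wvec \<in> U" using lower[OF U EU] by blast
    then show ?thesis using cyclic[OF U EU] by blast
  qed simp
qed

end

context wset
begin

lemma T_to_E:
  assumes U: "wsubspace U" and TU: "T_invariant lam mu U"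
  shows "E_invariant lam mu U"
  unfolding E_invariant_def
proof (intro allI ballI)
  fix i j :: int and x assume xU: "x \<in> U"
  define r where "r = j - i"
  define F where "F k = EE (k - r) k x" for k :: int
  define S where "S = {k. F k \<noteq> 0}"
  have fS: "finite S" unfolding S_def F_def by (rule finite_opE_support[OF lam0 mu0])
  define c :: complex where "c = 1 / (\<Prod>k\<in>S-{j}. (of_int k - of_int j))"
  define f where "f = smult c (\<Prod>k\<in>S-{j}. [:of_int k, 1:])"
  have pf: "poly f (of_int (- k)) = c * (\<Prod>k'\<in>S-{j}. (of_int k' - of_int k))" for k
    by (simp add: f_def poly_prod)
  have nz: "(\<Prod>k\<in>S-{j}. (of_int k - of_int j :: complex)) \<noteq> 0"
    using fS by (simp add: prod_zero_iff)
  have eq: "(\<lambda>k. wscale (poly f (of_int (- k))) (EE (k - r) k x)) = (\<lambda>k. if k = j then F j else 0)"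
  proof (rule ext)
    fix k
    show "wscale (poly f (of_int (- k))) (EE (k - r) k x) = (if k = j then F j else 0)"
    proof (cases "k = j")
      case True
      have "poly f (of_int (- j)) = 1" unfolding pf c_def using nz by simp
      then show ?thesis using True by (simp add: F_def)
    next
      case False
      show ?thesis
      proof (cases "F k = 0")
        case True then show ?thesis using False by (simp add: F_def)
      next
        case F2: False
        then have "k \<in> S - {j}" using False by (simp add: S_def)
        then have "(\<Prod>k'\<in>S-{j}. (of_int k' - of_int k :: complex)) = 0"
          using fS by (simp add: prod_zero_iff)
        then have "poly f (of_int (- k)) = 0" unfolding pf by simp
        then show ?thesis using False by simp
      qed
    qed
  qed
  have "opT lam mu r f x = F j" unfolding opT_def eq by simp
  moreover have "opT lam mu r f x \<in> U" using TU xU unfolding T_invariant_def by blast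
  ultimately show "EE i j x \<in> U" by (simp add: F_def r_def)
qed

end

lemma irr_W:
  assumes "wset2 lam mu n m i0 j0"
  shows "quot_irreducible_W lam mu (Nd lam mu d)"
proof -
  interpret wset2 lam mu n m i0 j0 by (rule assms)
  show ?thesis
    using irr_gl[of d] T_to_E unfolding quot_irreducible_gl_def quot_irreducible_W_def by blast
qed

theorem theorem7p4:
  fixes n m :: nat and lam mu :: "nat \<Rightarrow> complex" and d :: complex
  assumes "m \<ge> 1"
    and "\<forall>i>n. lam i = 0"
    and "\<forall>j>m. mu j = 0"
    and "\<exists>i\<le>n. lam i \<noteq> 0"
    and "\<exists>j\<in>{1..m}. mu j \<noteq> 0"
  shows "quot_irreducible_gl lam mu (Nd lam mu d) \<and> quot_irreducible_W lam mu (Nd lam mu d)"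
proof -
  obtain i0 where i0: "lam i0 \<noteq> 0" using assms(4) by blast
  obtain j0 where j0: "1 \<le> j0" "mu j0 \<noteq> 0" using assms(5) by auto
  have W: "wset2 lam mu n m i0 j0"
    by (unfold_locales) (use assms(2,3) i0 j0 in auto)
  interpret wset2 lam mu n m i0 j0 by (rule W)
  show ?thesis using irr_gl irr_W[OF W] by blast
qed

end
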